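(* Let $M$ be an $n\times n$ exceptional extremal copositive matrix that has exactly $n$ representative minimal zeros $\mathbf w_1,\dots,\mathbf w_n$, and let $W=[\mathbf w_1\ \mathbf w_2\ \cdots\ \mathbf w_n]$. Then every completely positive $n\times n$ matrix $A$ with $\operatorname{trace}(AM)=0$ has the form $A=WCW^T$ for some $n\times n$ completely positive matrix $C$, with $\operatorname{cp\text{-}rank}A=\operatorname{cp\text{-}rank}C$, and the number of CP factorizations (respectively, minimal CP factorizations) of $A$ equals the number of CP factorizations (respectively, minimal CP factorizations) of $C$.
   Context: A symmetric $n\times n$ matrix $A$ is completely positive if $A=BB^T$ for some entrywise nonnegative $n\times k$ matrix $B$; such an equality is a CP factorization of $A$. Only CP factorizations in which the columns of $B$ are pairwise linearly independent are considered, and two CP factorizations $A=BB^T=CC^T$ are considered equal if $C=BP$ for a permutation matrix $P$. The cp-rank of $A$ is the minimal number of columns of such a nonnegative $B$; a CP factorization with that many columns is called minimal. A symmetric matrix $M$ is copositive if $\mathbf x^TM\mathbf x\ge0$ for all $\mathbf x\in\mathbb R^n_+$; $\mathcal{COP}_n$ denotes the cone of such matrices, which is the dual of the completely positive cone under $\langle X,Y\rangle=\operatorname{trace}(XY)$. A copositive $M$ is exceptional if it is not the sum of a positive semidefinite matrix and a symmetric entrywise nonnegative matrix, and extremal if it generates an extreme ray of $\mathcal{COP}_n$. A zero of $M$ is a nonzero $\mathbf b\in\mathbb R^n_+$ with $\mathbf b^TM\mathbf b=0$; it is a minimal zero if its support does not strictly contain the support of another zero. A set of minimal zeros is representative if every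 minimal zero of $M$ is a positive scalar multiple of exactly one vector in the set. Known facts (Hildebrand), which may be used: every zero of a copositive $M$ is a nonnegative combination of finitely many minimal zeros, and an exceptional extremal copositive matrix in $\mathcal{COP}_n$ has at least $n$ representative minimal zeros, and these span $\mathbb R^n$. *)

theory Defs
  imports "HOL-Analysis.Analysis" "HOL-Library.Equipollence"
begin

definition symmetric_mat :: "real^'n^'n \<Rightarrow> bool" where
  "symmetric_mat M \<longleftrightarrow> transpose M = M"

definition nonneg_vec :: "real^'n \<Rightarrow> bool" where
  "nonneg_vec x \<longleftrightarrow> (\<forall>i. x $ i \<ge> 0)"

text \<open>outer product b b^T, i.e. the contribution of one column of B to B B^T\<close>
definition outer :: "real^'n \<Rightarrow> real^'n^'n" where
  "outer b = (\<chi> i j. b $ i * b $ j)"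

text \<open>A = B B^T with B nonnegative n x k; the columns of B are listed in bs (k = length bs).\<close>
definition nonneg_factorization :: "real^'n^'n \<Rightarrow> (real^'n) list \<Rightarrow> bool" where
  "nonneg_factorization A bs \<longleftrightarrow>
     (\<forall>b\<in>set bs. nonneg_vec b) \<and> A = sum_list (map outer bs)"

definition completely_positive :: "real^'n^'n \<Rightarrow> bool" where
  "completely_positive A \<longleftrightarrow> (\<exists>bs. nonneg_factorization A bs)"

definition cp_rank :: "real^'n^'n \<Rightarrow> nat" where
  "cp_rank A = (LEAST k. \<exists>bs. length bs = k \<and> nonneg_factorization A bs)"

text \<open>CP factorizations with pairwise linearly independent columns, modulo column
  permutation: represented by the (finite) set of columns.\<close>
definition cp_factorizations :: "real^'n^'n \<Rightarrow> (real^'n) set set" where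
  "cp_factorizations A =
     {S. finite S \<and> (\<forall>b\<in>S. nonneg_vec b)
         \<and> (\<forall>b\<in>S. \<forall>c\<in>S. b \<noteq> c \<longrightarrow> independent {b, c})
         \<and> A = (\<Sum>b\<in>S. outer b)}"

definition minimal_cp_factorizations :: "real^'n^'n \<Rightarrow> (real^'n) set set" where
  "minimal_cp_factorizations A = {S\<in>cp_factorizations A. card S = cp_rank A}"

definition copositive :: "real^'n^'n \<Rightarrow> bool" where
  "copositive M \<longleftrightarrow> symmetric_mat M \<and> (\<forall>x. nonneg_vec x \<longrightarrow> x \<bullet> (M *v x) \<ge> 0)"

definition psd :: "real^'n^'n \<Rightarrow> bool" where
  "psd M \<longleftrightarrow> symmetric_mat M \<and> (\<forall>x. x \<bullet> (M *v x) \<ge> 0)"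

definition nonneg_mat :: "real^'n^'n \<Rightarrow> bool" where
  "nonneg_mat N \<longleftrightarrow> (\<forall>i j. N $ i $ j \<ge> 0)"

definition exceptional :: "real^'n^'n \<Rightarrow> bool" where
  "exceptional M \<longleftrightarrow> copositive M \<and>
     \<not> (\<exists>P N. psd P \<and> symmetric_mat N \<and> nonneg_mat N \<and> M = P + N)"

definition extremal :: "real^'n^'n \<Rightarrow> bool" where
  "extremal M \<longleftrightarrow> copositive M \<and> M \<noteq> 0 \<and>
     (\<forall>X Y. copositive X \<and> copositive Y \<and> M = X + Y \<longrightarrow> (\<exists>a\<ge>0. X = a *\<^sub>R M))"

definition is_zero :: "real^'n^'n \<Rightarrow> real^'n \<Rightarrow> bool" where
  "is_zero M b \<longleftrightarrow> nonneg_vec b \<and> b \<noteq> 0 \<and> b \<bullet> (M *v b) = 0"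

definition supp :: "real^'n \<Rightarrow> 'n set" where
  "supp b = {i. b $ i \<noteq> 0}"

definition minimal_zero :: "real^'n^'n \<Rightarrow> real^'n \<Rightarrow> bool" where
  "minimal_zero M b \<longleftrightarrow> is_zero M b \<and> \<not> (\<exists>c. is_zero M c \<and> supp c \<subset> supp b)"

definition representative_zeros :: "real^'n^'n \<Rightarrow> (real^'n) set \<Rightarrow> bool" where
  "representative_zeros M R \<longleftrightarrow> (\<forall>r\<in>R. minimal_zero M r) \<and>
     (\<forall>z. minimal_zero M z \<longrightarrow> (\<exists>!r\<in>R. \<exists>t>0. z = t *\<^sub>R r))"

definition col_matrix :: "('n \<Rightarrow> real^'n) \<Rightarrow> real^'n^'n" where
  "col_matrix w = (\<chi> i j. w j $ i)"

end

theory Submission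
  imports Defs
begin


lemma sym_dot:
  fixes M :: "real^'n^'n"
  assumes "symmetric_mat M"
  shows "u \<bullet> (M *v v) = v \<bullet> (M *v u)"
proof -
  have "u \<bullet> (M *v v) = (u v* M) \<bullet> v" by (simp add: dot_lmul_matrix)
  also have "u v* M = M *v u"
    using assms unfolding symmetric_mat_def by (metis transpose_matrix_vector)
  finally show ?thesis by (simp add: inner_commute)
qed

lemma quad_expand:
  fixes M :: "real^'n^'n"
  assumes "symmetric_mat M"
  shows "(u + v) \<bullet> (M *v (u + v)) = u \<bullet> (M *v u) + 2 * (v \<bullet> (M *v u)) + v \<bullet> (M *v v)"
  using sym_dot[OF assms, of u v]
  by (simp add: matrix_vector_right_distrib inner_add_left inner_add_right)

lemma dot_real: "(x::real^'n) \<bullet> y = (\<Sum>i\<in>UNIV. x$i * y$i)"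
  by (simp add: inner_vec_def)

lemma cont_quad: "continuous_on UNIV (\<lambda>x::real^'n. x \<bullet> (M *v x))"
  by (intro continuous_intros linear_continuous_on matrix_vector_mul_bounded_linear)

lemma "subspace (range ((*v) (V::real^'n^'n)))"
  by (intro linear_subspace_image subspace_UNIV) simp



lemma zero_Mb_nonneg:
  fixes M :: "real^'n^'n"
  assumes cop: "copositive M" and z: "is_zero M b"
  shows "0 \<le> (M *v b)$i"
proof (rule ccontr)
  assume neg: "\<not> 0 \<le> (M *v b)$i"
  define m where "m = (M *v b)$i"
  define e where "e = axis i (1::real)"
  define k where "k = e \<bullet> (M *v e)"
  define s where "s = - m / (\<bar>k\<bar> + 1)"
  have sym: "symmetric_mat M" using cop unfolding copositive_def by simp
  have m0: "m < 0" using neg m_def by simp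
  have s0: "s > 0" using m0 unfolding s_def by (intro divide_pos_pos) auto
  have nn: "nonneg_vec (b + s *\<^sub>R e)"
    using z s0 unfolding is_zero_def nonneg_vec_def e_def by (auto simp: axis_def)
  have "0 \<le> (b + s *\<^sub>R e) \<bullet> (M *v (b + s *\<^sub>R e))"
    using cop nn unfolding copositive_def by blast
  also have "\<dots> = b \<bullet> (M *v b) + 2 * ((s *\<^sub>R e) \<bullet> (M *v b)) + (s *\<^sub>R e) \<bullet> (M *v (s *\<^sub>R e))"
    by (rule quad_expand[OF sym])
  also have "\<dots> = 2 * s * m + s * s * k"
    using z unfolding is_zero_def m_def k_def e_def
    by (simp add: matrix_vector_mult_scaleR inner_axis' algebra_simps)
  finally have A: "0 \<le> 2 * s * m + s * s * k" .
  have "0 \<le> 2 * m + s * k"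
  proof -
    have "0 \<le> s * (2 * m + s * k)" using A by (simp add: algebra_simps)
    thus ?thesis using s0 by (simp add: zero_le_mult_iff)
  qed
  moreover have "s * k \<le> - m"
  proof -
    have "s * k \<le> s * \<bar>k\<bar>" using s0 by (simp add: mult_left_mono)
    also have "\<dots> = -m * (\<bar>k\<bar> / (\<bar>k\<bar> + 1))" by (simp add: s_def)
    also have "\<dots> \<le> -m * 1" using m0 by (intro mult_left_mono) auto
    finally show ?thesis by simp
  qed
  ultimately show False using m0 by linarith
qed

lemma zero_Mb_supp:
  fixes M :: "real^'n^'n"
  assumes cop: "copositive M" and z: "is_zero M b" and bi: "b$i \<noteq> 0"
  shows "(M *v b)$i = 0"
proof -
  have nn: "\<forall>j\<in>UNIV. 0 \<le> b$j * (M *v b)$j"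
    using zero_Mb_nonneg[OF cop z] z unfolding is_zero_def nonneg_vec_def by simp
  have "(\<Sum>j\<in>UNIV. b$j * (M *v b)$j) = 0" using z unfolding is_zero_def by (simp add: dot_real)
  hence "\<forall>j\<in>UNIV. b$j * (M *v b)$j = 0" using nn by (simp add: sum_nonneg_eq_0_iff)
  thus ?thesis using bi by (metis UNIV_I mult_eq_0_iff)
qed

lemma sub_step:
  fixes x z :: "real^'n"
  assumes x: "nonneg_vec x" and z: "nonneg_vec z" and z0: "z \<noteq> 0"
  obtains j t where "z$j > 0" "t = x$j / z$j" "t \<ge> 0"
    "nonneg_vec (x - t *\<^sub>R z)" "(x - t *\<^sub>R z)$j = 0"
    "supp (x - t *\<^sub>R z) \<subseteq> (supp x \<union> supp z) - {j}"
proof -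
  define S where "S = supp z"
  have S: "finite S" "S \<noteq> {}" using z0 unfolding S_def supp_def by (auto simp: vec_eq_iff)
  define r where "r = Min ((\<lambda>i. x$i / z$i) ` S)"
  have "r \<in> (\<lambda>i. x$i / z$i) ` S" unfolding r_def using S by (intro Min_in) auto
  then obtain j where jS: "j \<in> S" and rj: "r = x$j / z$j" by auto
  have zj: "z$j > 0" using jS z unfolding S_def supp_def nonneg_vec_def by (metis less_eq_real_def mem_Collect_eq)
  have r0: "r \<ge> 0" using rj zj x unfolding nonneg_vec_def by simp
  have le: "r \<le> x$i / z$i" if "i \<in> S" for i using S that unfolding r_def by simp
  have nn: "nonneg_vec (x - r *\<^sub>R z)"
    unfolding nonneg_vec_def
  proof
    fix i
    show "0 \<le> (x - r *\<^sub>R z) $ i"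
    proof (cases "i \<in> S")
      case True
      hence zi: "z$i > 0" using z unfolding S_def supp_def nonneg_vec_def by (metis less_eq_real_def mem_Collect_eq)
      have "r * z$i \<le> x$i" using le[OF True] zi by (simp add: pos_le_divide_eq)
      thus ?thesis by simp
    next
      case False thus ?thesis using x unfolding S_def supp_def nonneg_vec_def by simp
    qed
  qed
  have j0: "(x - r *\<^sub>R z)$j = 0" using rj zj by simp
  have "supp (x - r *\<^sub>R z) \<subseteq> (supp x \<union> supp z) - {j}"
    using j0 unfolding supp_def by auto
  thus ?thesis using that zj rj r0 nn j0 by blast
qed



lemma colmat_mult: "col_matrix w *v x = (\<Sum>j\<in>UNIV. x$j *\<^sub>R w j)"
  by (simp add: vec_eq_iff col_matrix_def matrix_vector_mult_def sum_component mult.commute)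

lemma colmat_axis: "col_matrix w *v axis i t = t *\<^sub>R w i"
proof -
  have "(\<Sum>j\<in>UNIV. (axis i t)$j *\<^sub>R w j) = (\<Sum>j\<in>UNIV. if j = i then t *\<^sub>R w j else 0)"
    by (intro sum.cong) (auto simp: axis_def)
  thus ?thesis by (simp add: colmat_mult)
qed

lemma mvm_neg: "(M::real^'n^'n) *v (- x) = - (M *v x)"
  by (simp add: vec_eq_iff matrix_vector_mult_def sum_negf)

lemma orth_zero:
  fixes M :: "real^'n^'n"
  assumes cop: "copositive M" and b: "is_zero M b" and sc: "supp c \<subseteq> supp b"
  shows "c \<bullet> (M *v b) = 0"
proof -
  have "\<forall>i\<in>UNIV. c$i * (M *v b)$i = 0"
  proof
    fix i
    show "c$i * (M *v b)$i = 0"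
    proof (cases "c$i = 0")
      case False
      hence "b$i \<noteq> 0" using sc unfolding supp_def by auto
      thus ?thesis using zero_Mb_supp[OF cop b] by simp
    qed simp
  qed
  thus ?thesis unfolding dot_real by (intro sum.neutral) blast
qed

lemma decomp:
  fixes M :: "real^'n^'n"
  assumes cop: "copositive M"
    and mz: "\<And>z. minimal_zero M z \<Longrightarrow> \<exists>i t. t > 0 \<and> z = t *\<^sub>R w i"
  shows "is_zero M b \<Longrightarrow> \<exists>l. nonneg_vec l \<and> b = col_matrix w *v l"
proof (induction "card (supp b)" arbitrary: b rule: less_induct)
  case less
  have sym: "symmetric_mat M" using cop unfolding copositive_def by simp
  show ?case
  proof (cases "minimal_zero M b")
    case True
    then obtain i t where t: "t > 0" "b = t *\<^sub>R w i" using mz by blast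
    have "nonneg_vec (axis i t)" using t unfolding nonneg_vec_def axis_def by auto
    thus ?thesis using t by (metis colmat_axis)
  next
    case False
    then obtain c where c: "is_zero M c" and csub: "supp c \<subset> supp b"
      using less.prems unfolding minimal_zero_def by blast
    have bnn: "nonneg_vec b" and cnn: "nonneg_vec c" "c \<noteq> 0"
      using less.prems c unfolding is_zero_def by auto
    obtain j t where j: "c$j > 0" and t: "t \<ge> 0" and b'nn: "nonneg_vec (b - t *\<^sub>R c)"
      and b'supp: "supp (b - t *\<^sub>R c) \<subseteq> (supp b \<union> supp c) - {j}"
      using sub_step[OF bnn cnn] by metis
    have "j \<in> supp c" using j unfolding supp_def by simp
    hence jb: "j \<in> supp b" using csub by blast
    have fin: "finite (supp b)" by simp
    have cardc: "card (supp c) < card (supp b)" using csub fin by (rule psubset_card_mono[rotated])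
    have "supp (b - t *\<^sub>R c) \<subset> supp b" using b'supp jb csub by auto
    hence cardb': "card (supp (b - t *\<^sub>R c)) < card (supp b)" using fin by (rule psubset_card_mono[rotated])
    obtain lc where lc: "nonneg_vec lc" "c = col_matrix w *v lc" using less.hyps[OF cardc c] by blast
    have cMb: "c \<bullet> (M *v b) = 0" using orth_zero[OF cop less.prems] csub by auto
    have fc: "c \<bullet> (M *v c) = 0" using c unfolding is_zero_def by simp
    have fb: "b \<bullet> (M *v b) = 0" using less.prems unfolding is_zero_def by simp
    have fb': "(b - t *\<^sub>R c) \<bullet> (M *v (b - t *\<^sub>R c)) = 0"
      using quad_expand[OF sym, of b "(-t) *\<^sub>R c"] by (simp add: cMb fc fb matrix_vector_mult_scaleR mvm_neg)
    show ?thesis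
    proof (cases "b - t *\<^sub>R c = 0")
      case True
      hence "b = col_matrix w *v (t *\<^sub>R lc)" using lc by (simp add: matrix_vector_mult_scaleR)
      moreover have "nonneg_vec (t *\<^sub>R lc)" using lc t unfolding nonneg_vec_def by simp
      ultimately show ?thesis by blast
    next
      case False
      hence "is_zero M (b - t *\<^sub>R c)" using b'nn fb' unfolding is_zero_def by simp
      then obtain l' where l': "nonneg_vec l'" "b - t *\<^sub>R c = col_matrix w *v l'"
        using less.hyps[OF cardb'] by blast
      have "b = col_matrix w *v (l' + t *\<^sub>R lc)" using l' lc
        by (simp add: matrix_vector_mult_scaleR matrix_vector_right_distrib algebra_simps)
      moreover have "nonneg_vec (l' + t *\<^sub>R lc)" using lc l' t unfolding nonneg_vec_def by simp
      ultimately show ?thesis by blast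
    qed
  qed
qed



lemma bnd:
  fixes M :: "real^'n^'n"
  shows "\<bar>u \<bullet> (M *v v)\<bar> \<le> (\<Sum>i\<in>UNIV. \<Sum>j\<in>UNIV. \<bar>M$i$j\<bar>) * (\<Sum>i\<in>UNIV. \<bar>u$i\<bar>) * norm v"
proof -
  define Bm where "Bm = (\<Sum>i\<in>UNIV. \<Sum>j\<in>UNIV. \<bar>M$i$j\<bar>)"
  have row: "\<bar>(M *v v)$i\<bar> \<le> Bm * norm v" for i
  proof -
    have "\<bar>(M *v v)$i\<bar> = \<bar>\<Sum>j\<in>UNIV. M$i$j * v$j\<bar>" by (simp add: matrix_vector_mult_def)
    also have "\<dots> \<le> (\<Sum>j\<in>UNIV. \<bar>M$i$j * v$j\<bar>)" by (rule sum_abs)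
    also have "\<dots> \<le> (\<Sum>j\<in>UNIV. \<bar>M$i$j\<bar> * norm v)"
      by (intro sum_mono) (simp add: abs_mult mult_left_mono component_le_norm_cart)
    also have "\<dots> = (\<Sum>j\<in>UNIV. \<bar>M$i$j\<bar>) * norm v" by (simp add: sum_distrib_right)
    also have "(\<Sum>j\<in>UNIV. \<bar>M$i$j\<bar>) \<le> Bm" unfolding Bm_def
      by (rule member_le_sum[where f="\<lambda>i. \<Sum>j\<in>UNIV. \<bar>M$i$j\<bar>"]) (auto intro: sum_nonneg)
    hence "(\<Sum>j\<in>UNIV. \<bar>M$i$j\<bar>) * norm v \<le> Bm * norm v" by (simp add: mult_right_mono)
    finally show ?thesis .
  qed
  have "\<bar>u \<bullet> (M *v v)\<bar> = \<bar>\<Sum>i\<in>UNIV. u$i * (M *v v)$i\<bar>" by (simp add: dot_real)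
  also have "\<dots> \<le> (\<Sum>i\<in>UNIV. \<bar>u$i * (M *v v)$i\<bar>)" by (rule sum_abs)
  also have "\<dots> \<le> (\<Sum>i\<in>UNIV. \<bar>u$i\<bar> * (Bm * norm v))"
    by (intro sum_mono) (simp add: abs_mult mult_left_mono row)
  also have "\<dots> = Bm * (\<Sum>i\<in>UNIV. \<bar>u$i\<bar>) * norm v" by (simp add: sum_distrib_left sum_distrib_right mult.commute mult.left_commute)
  finally show ?thesis unfolding Bm_def .
qed

lemma compact_local:
  assumes K: "compact K"
    and loc: "\<And>p. p \<in> K \<Longrightarrow> \<exists>U \<delta>. open U \<and> p \<in> U \<and> \<delta> > 0 \<and> (\<forall>x\<in>U\<inter>K. \<delta> * G x \<le> (F x::real))"
    and G: "\<And>x. x \<in> K \<Longrightarrow> G x \<ge> 0"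
  shows "\<exists>\<epsilon>>0. \<forall>x\<in>K. \<epsilon> * G x \<le> F x"
proof -
  obtain U \<delta> where U: "\<And>p. p \<in> K \<Longrightarrow> open (U p) \<and> p \<in> U p \<and> \<delta> p > 0 \<and> (\<forall>x\<in>U p\<inter>K. \<delta> p * G x \<le> F x)"
    using loc by metis
  have "K \<subseteq> (\<Union>p\<in>K. U p)" using U by blast
  then obtain K' where K': "K' \<subseteq> K" "finite K'" "K \<subseteq> (\<Union>p\<in>K'. U p)"
    using compactE_image[OF K, of K U] U by metis
  define \<epsilon> where "\<epsilon> = Min (insert 1 (\<delta> ` K'))"
  have e0: "\<epsilon> > 0" unfolding \<epsilon>_def using K' U by (subst Min_gr_iff) auto
  have "\<epsilon> * G x \<le> F x" if x: "x \<in> K" for x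
  proof -
    obtain p where p: "p \<in> K'" "x \<in> U p" using K' x by blast
    have "\<epsilon> \<le> \<delta> p" unfolding \<epsilon>_def using p K' by (intro Min_le) auto
    hence "\<epsilon> * G x \<le> \<delta> p * G x" using G[OF x] by (simp add: mult_right_mono)
    also have "\<dots> \<le> F x" using U[of p] p K' x by blast
    finally show ?thesis .
  qed
  thus ?thesis using e0 by blast
qed



lemma caseA:
  fixes M :: "real^'n^'n" and h :: "real^'n"
  assumes cop: "copositive M" and hz: "\<And>z. is_zero M z \<Longrightarrow> h \<bullet> z = 0"
    and z: "is_zero M z" and zI: "supp z \<subseteq> I" and Mz: "\<forall>i\<in>I. (M *v z)$i = 0"
    and IH: "\<And>i. i \<in> supp z \<Longrightarrow> \<exists>\<epsilon>>0. \<forall>x. nonneg_vec x \<and> supp x \<subseteq> I - {i} \<longrightarrow> \<epsilon> * (h \<bullet> x)^2 \<le> x \<bullet> (M *v x)"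
  shows "\<exists>\<epsilon>>0. \<forall>x. nonneg_vec x \<and> supp x \<subseteq> I \<longrightarrow> \<epsilon> * (h \<bullet> x)^2 \<le> x \<bullet> (M *v x)"
proof -
  have sym: "symmetric_mat M" using cop unfolding copositive_def by simp
  obtain e where e: "\<And>i. i \<in> supp z \<Longrightarrow> e i > 0 \<and> (\<forall>x. nonneg_vec x \<and> supp x \<subseteq> I - {i} \<longrightarrow> e i * (h \<bullet> x)^2 \<le> x \<bullet> (M *v x))"
    using IH by metis
  have znn: "nonneg_vec z" "z \<noteq> 0" using z unfolding is_zero_def by auto
  have fin: "finite (supp z)" "supp z \<noteq> {}" using znn unfolding supp_def by (auto simp: vec_eq_iff)
  define \<epsilon> where "\<epsilon> = Min (e ` supp z)"
  have e0: "\<epsilon> > 0" unfolding \<epsilon>_def using fin e by (subst Min_gr_iff) auto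
  have "\<epsilon> * (h \<bullet> x)^2 \<le> x \<bullet> (M *v x)" if x: "nonneg_vec x" "supp x \<subseteq> I" for x
  proof -
    obtain j t where j: "z$j > 0" and t: "nonneg_vec (x - t *\<^sub>R z)"
      and ys: "supp (x - t *\<^sub>R z) \<subseteq> (supp x \<union> supp z) - {j}"
      using sub_step[OF x(1) znn] by metis
    have jz: "j \<in> supp z" using j unfolding supp_def by simp
    have ysI: "supp (x - t *\<^sub>R z) \<subseteq> I - {j}" using ys x(2) zI by blast
    have zMx: "z \<bullet> (M *v x) = 0"
    proof -
      have "z \<bullet> (M *v x) = x \<bullet> (M *v z)" by (rule sym_dot[OF sym])
      also have "\<dots> = 0" unfolding dot_real
      proof (intro sum.neutral ballI)
        fix i show "x$i * (M *v z)$i = 0"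
        proof (cases "x$i = 0")
          case False hence "i \<in> I" using x(2) unfolding supp_def by auto
          thus ?thesis using Mz by simp
        qed simp
      qed
      finally show ?thesis .
    qed
    have fz: "z \<bullet> (M *v z) = 0" using z unfolding is_zero_def by simp
    have fy: "(x - t *\<^sub>R z) \<bullet> (M *v (x - t *\<^sub>R z)) = x \<bullet> (M *v x)"
      using quad_expand[OF sym, of x "(-t) *\<^sub>R z"] by (simp add: zMx fz matrix_vector_mult_scaleR mvm_neg)
    have gy: "h \<bullet> (x - t *\<^sub>R z) = h \<bullet> x" using hz[OF z] by (simp add: inner_diff_right)
    have "\<epsilon> \<le> e j" unfolding \<epsilon>_def using fin jz by simp
    hence "\<epsilon> * (h \<bullet> x)^2 \<le> e j * (h \<bullet> x)^2" by (simp add: mult_right_mono)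
    also have "\<dots> \<le> x \<bullet> (M *v x)" using e[OF jz] t ysI fy gy by metis
    finally show ?thesis .
  qed
  thus ?thesis using e0 by blast
qed



lemma local_zero:
  fixes M :: "real^'n^'n" and h :: "real^'n"
  assumes cop: "copositive M" and p: "is_zero M p" and pI: "supp p \<subseteq> I"
    and Jdef: "J = {i\<in>I. (M *v p)$i \<noteq> 0}" and Jne: "J \<noteq> {}"
    and e'0: "\<epsilon>' > 0"
    and IH: "\<forall>x. nonneg_vec x \<and> supp x \<subseteq> I - J \<longrightarrow> \<epsilon>' * (h \<bullet> x)^2 \<le> x \<bullet> (M *v x)"
  shows "\<exists>\<delta>>0. \<exists>r>0. \<forall>x. nonneg_vec x \<and> supp x \<subseteq> I \<and> norm x = 1 \<and> norm (x - p) < r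
            \<longrightarrow> \<delta> * (h \<bullet> x)^2 \<le> x \<bullet> (M *v x)"
proof -
  have sym: "symmetric_mat M" using cop unfolding copositive_def by simp
  define c where "c = Min ((\<lambda>i. (M *v p)$i) ` J)"
  have finJ: "finite J" by simp
  have c0: "c > 0" unfolding c_def using finJ Jne
    by (subst Min_gr_iff) (auto simp: Jdef intro: order.not_eq_order_implies_strict[OF _ zero_Mb_nonneg[OF cop p]])
  have cle: "c \<le> (M *v p)$i" if "i \<in> J" for i unfolding c_def using finJ that by simp
  define Bm where "Bm = (\<Sum>i\<in>UNIV. \<Sum>j\<in>UNIV. \<bar>M$i$j\<bar>)"
  define H where "H = (\<Sum>i\<in>UNIV. \<bar>h$i\<bar>)"
  define N where "N = real CARD('n)"
  have Bm0: "Bm \<ge> 0" unfolding Bm_def by (intro sum_nonneg) auto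
  have H0: "H \<ge> 0" unfolding H_def by (intro sum_nonneg) auto
  have N0: "N \<ge> 0" unfolding N_def by simp
  define r where "r = c / (3 * Bm + 1)"
  define \<delta> where "\<delta> = min (\<epsilon>' / 2) (c / (2 * H^2 * N + 1))"
  have r0: "r > 0" unfolding r_def using c0 Bm0 by simp
  have d0: "\<delta> > 0" unfolding \<delta>_def using c0 e'0 H0 N0 by (simp add: add_nonneg_pos)
  have Br: "3 * Bm * r \<le> c"
  proof -
    have "3 * Bm * r = c * (3 * Bm / (3 * Bm + 1))" unfolding r_def by (simp add: field_simps)
    also have "\<dots> \<le> c * 1" using c0 Bm0 by (intro mult_left_mono) auto
    finally show ?thesis by simp
  qed
  have pI': "p$i = 0" if "i \<notin> I - J" for i
  proof (rule ccontr)
    assume "p$i \<noteq> 0"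
    hence "i \<in> I" "(M *v p)$i = 0" using pI zero_Mb_supp[OF cop p] unfolding supp_def by auto
    thus False using that Jdef by auto
  qed
  have main: "\<delta> * (h \<bullet> x)^2 \<le> x \<bullet> (M *v x)"
    if x: "nonneg_vec x" "supp x \<subseteq> I" "norm x = 1" "norm (x - p) < r" for x
  proof -
    define y where "y = (\<chi> i. if i \<in> I - J then x$i else 0)"
    define q where "q = (\<chi> i. if i \<in> J then x$i else 0)"
    define s where "s = (\<Sum>i\<in>UNIV. q$i)"
    define d where "d = norm (x - p)"
    have xI: "x$i = 0" if "i \<notin> I" for i using x(2) that unfolding supp_def by auto
    have JI: "J \<subseteq> I" using Jdef by auto
    have xyq: "x = y + q" unfolding y_def q_def using xI JI by (auto simp: vec_eq_iff)
    have ynn: "nonneg_vec y" using x(1) unfolding y_def nonneg_vec_def by auto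
    have ysupp: "supp y \<subseteq> I - J" unfolding y_def supp_def by auto
    have qnn: "\<And>i. q$i \<ge> 0" using x(1) unfolding q_def nonneg_vec_def by auto
    have s0: "s \<ge> 0" unfolding s_def using qnn by (simp add: sum_nonneg)
    have sabs: "(\<Sum>i\<in>UNIV. \<bar>q$i\<bar>) = s" unfolding s_def using qnn by simp
    have qle1: "q$i \<le> 1" for i
    proof -
      have "q$i \<le> \<bar>x$i\<bar>" unfolding q_def by auto
      also have "\<dots> \<le> 1" using component_le_norm_cart[of x i] x(3) by simp
      finally show ?thesis .
    qed
    have sN: "s \<le> N" unfolding s_def N_def using sum_mono[of UNIV "\<lambda>i. q$i" "\<lambda>i. 1"] qle1 by simp
    have qles: "q$i \<le> s" for i unfolding s_def
      by (rule member_le_sum[where f="\<lambda>i. q$i"]) (auto simp: qnn)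
    have nyp: "norm (y - p) \<le> d" unfolding d_def
      by (rule norm_le_componentwise_cart) (auto simp: y_def pI')
    have nq: "norm q \<le> d" unfolding d_def
      by (rule norm_le_componentwise_cart) (auto simp: q_def pI')
    have dr: "d \<le> r" using x(4) d_def by simp
    have f_exp: "x \<bullet> (M *v x) = y \<bullet> (M *v y) + 2 * (q \<bullet> (M *v p)) + 2 * (q \<bullet> (M *v (y - p))) + q \<bullet> (M *v q)"
    proof -
      have "q \<bullet> (M *v y) = q \<bullet> (M *v p) + q \<bullet> (M *v (y - p))"
        by (metis add_diff_cancel_left' diff_add_cancel inner_add_right matrix_vector_right_distrib)
      thus ?thesis using quad_expand[OF sym, of y q] xyq by simp
    qed
    have qMp: "q \<bullet> (M *v p) \<ge> c * s"
    proof -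
      have "c * s = (\<Sum>i\<in>UNIV. c * q$i)" unfolding s_def by (simp add: sum_distrib_left)
      also have "\<dots> \<le> (\<Sum>i\<in>UNIV. q$i * (M *v p)$i)"
      proof (intro sum_mono)
        fix i show "c * q$i \<le> q$i * (M *v p)$i"
        proof (cases "i \<in> J")
          case True thus ?thesis using cle[OF True] qnn[of i] by (metis mult.commute mult_left_mono)
        qed (simp add: q_def)
      qed
      also have "\<dots> = q \<bullet> (M *v p)" by (simp add: dot_real)
      finally show ?thesis .
    qed
    have b1: "\<bar>q \<bullet> (M *v (y - p))\<bar> \<le> Bm * s * d"
    proof -
      have "\<bar>q \<bullet> (M *v (y - p))\<bar> \<le> Bm * s * norm (y - p)" using bnd[of q M "y - p"] sabs Bm_def by simp
      also have "\<dots> \<le> Bm * s * d" using nyp Bm0 s0 by (simp add: mult_left_mono)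
      finally show ?thesis .
    qed
    have b2: "\<bar>q \<bullet> (M *v q)\<bar> \<le> Bm * s * d"
    proof -
      have "\<bar>q \<bullet> (M *v q)\<bar> \<le> Bm * s * norm q" using bnd[of q M q] sabs Bm_def by simp
      also have "\<dots> \<le> Bm * s * d" using nq Bm0 s0 by (simp add: mult_left_mono)
      finally show ?thesis .
    qed
    have "3 * (Bm * s * d) \<le> 3 * (Bm * s * r)" using dr Bm0 s0 by (simp add: mult_left_mono)
    also have "\<dots> = s * (3 * Bm * r)" by simp
    also have "\<dots> \<le> s * c" using Br s0 by (simp add: mult_left_mono)
    finally have bsd: "3 * (Bm * s * d) \<le> c * s" by (metis mult.commute)
    have fx: "x \<bullet> (M *v x) \<ge> y \<bullet> (M *v y) + c * s"
      using f_exp qMp b1 b2 bsd by linarith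
    have fy: "y \<bullet> (M *v y) \<ge> \<epsilon>' * (h \<bullet> y)^2" using IH ynn ysupp by blast
    have hq: "\<bar>h \<bullet> q\<bar> \<le> H * s"
    proof -
      have "\<bar>h \<bullet> q\<bar> = \<bar>\<Sum>i\<in>UNIV. h$i * q$i\<bar>" by (simp add: dot_real)
      also have "\<dots> \<le> (\<Sum>i\<in>UNIV. \<bar>h$i * q$i\<bar>)" by (rule sum_abs)
      also have "\<dots> \<le> (\<Sum>i\<in>UNIV. \<bar>h$i\<bar> * s)"
        by (intro sum_mono) (simp add: abs_mult qnn qles mult_left_mono)
      also have "\<dots> = H * s" unfolding H_def by (simp add: sum_distrib_right)
      finally show ?thesis .
    qed
    have hq2: "(h \<bullet> q)^2 \<le> H^2 * N * s"
    proof -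
      have "(h \<bullet> q)^2 = \<bar>h \<bullet> q\<bar>^2" by simp
      also have "\<dots> \<le> (H * s)^2" using hq by (intro power_mono) auto
      also have "\<dots> = H^2 * s * s" by (simp add: power2_eq_square)
      also have "\<dots> \<le> H^2 * N * s" using sN s0 by (intro mult_right_mono mult_left_mono) auto
      finally show ?thesis .
    qed
    have gx: "(h \<bullet> x)^2 \<le> 2 * (h \<bullet> y)^2 + 2 * (h \<bullet> q)^2"
    proof -
      have "(h \<bullet> x)^2 = (h \<bullet> y + h \<bullet> q)^2" using xyq by (simp add: inner_add_right)
      also have "\<dots> \<le> 2 * (h \<bullet> y)^2 + 2 * (h \<bullet> q)^2"
        using sum_squares_ge_zero[of "h \<bullet> y - h \<bullet> q" 0] by (simp add: power2_eq_square algebra_simps)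
      finally show ?thesis .
    qed
    have dle1: "2 * \<delta> \<le> \<epsilon>'" unfolding \<delta>_def by simp
    have dle2: "2 * \<delta> * H^2 * N \<le> c"
    proof -
      have "\<delta> * (2 * H^2 * N + 1) \<le> c" unfolding \<delta>_def using H0 N0
        by (metis min.cobounded2 add_nonneg_pos mult_nonneg_nonneg zero_le_numeral zero_le_power2 zero_less_one pos_le_divide_eq)
      thus ?thesis using d0 by (simp add: algebra_simps)
    qed
    have "\<delta> * (h \<bullet> x)^2 \<le> \<delta> * (2 * (h \<bullet> y)^2 + 2 * (h \<bullet> q)^2)" using gx d0 by (simp add: mult_left_mono)
    also have "\<dots> = (2 * \<delta>) * (h \<bullet> y)^2 + (2 * \<delta>) * (h \<bullet> q)^2" by (simp add: algebra_simps)
    also have "\<dots> \<le> \<epsilon>' * (h \<bullet> y)^2 + (2 * \<delta>) * (H^2 * N * s)"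
      using dle1 hq2 d0 by (intro add_mono mult_right_mono mult_left_mono) auto
    also have "(2 * \<delta>) * (H^2 * N * s) = (2 * \<delta> * H^2 * N) * s" by simp
    also have "\<dots> \<le> c * s" using dle2 s0 by (simp add: mult_right_mono)
    finally show ?thesis using fx fy by linarith
  qed
  show ?thesis using main d0 r0 by blast
qed



lemma closed_K:
  "closed {x::real^'n. nonneg_vec x \<and> supp x \<subseteq> I \<and> norm x = 1}"
proof -
  have eq: "{x::real^'n. nonneg_vec x \<and> supp x \<subseteq> I \<and> norm x = 1} =
     (\<Inter>i. {x. 0 \<le> x$i}) \<inter> (\<Inter>i\<in>-I. {x. x$i = 0}) \<inter> {x. norm x = 1}"
    unfolding nonneg_vec_def supp_def by auto
  show ?thesis unfolding eq
    by (intro closed_Int closed_INT ballI closed_Collect_le closed_Collect_eq continuous_intros continuous_on_component)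
qed

lemma compact_K:
  "compact {x::real^'n. nonneg_vec x \<and> supp x \<subseteq> I \<and> norm x = 1}"
  by (intro compact_eq_bounded_closed[THEN iffD2] conjI closed_K)
     (auto simp: bounded_iff)



lemma local_pos:
  fixes M :: "real^'n^'n" and h :: "real^'n"
  assumes fp: "p \<bullet> (M *v p) > 0"
  shows "\<exists>U \<delta>. open U \<and> p \<in> U \<and> \<delta> > 0 \<and> (\<forall>x\<in>U \<inter> K. \<delta> * (h \<bullet> x)^2 \<le> x \<bullet> (M *v x))"
proof -
  define a where "a = p \<bullet> (M *v p)"
  define b where "b = (h \<bullet> p)^2 + 1"
  have b0: "b > 0" unfolding b_def by (simp add: add_nonneg_pos)
  define U where "U = {x. a / 2 < x \<bullet> (M *v x)} \<inter> {x. (h \<bullet> x)^2 < b}"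
  have "open U" unfolding U_def
    by (intro open_Int open_Collect_less continuous_intros cont_quad)
  moreover have "p \<in> U" unfolding U_def a_def b_def using fp by simp
  moreover have "a / (2 * b) > 0" using fp b0 a_def by simp
  moreover have "\<forall>x\<in>U \<inter> K. a / (2 * b) * (h \<bullet> x)^2 \<le> x \<bullet> (M *v x)"
  proof
    fix x assume "x \<in> U \<inter> K"
    hence x: "a / 2 < x \<bullet> (M *v x)" "(h \<bullet> x)^2 < b" unfolding U_def by auto
    have "a / (2 * b) * (h \<bullet> x)^2 \<le> a / (2 * b) * b"
      using x(2) fp b0 a_def by (intro mult_left_mono) auto
    also have "\<dots> = a / 2" using b0 by simp
    finally show "a / (2 * b) * (h \<bullet> x)^2 \<le> x \<bullet> (M *v x)" using x(1) by simp
  qed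
  ultimately show ?thesis by blast
qed

lemma pert_aux:
  fixes M :: "real^'n^'n" and h :: "real^'n"
  assumes cop: "copositive M" and hz: "\<And>z. is_zero M z \<Longrightarrow> h \<bullet> z = 0"
  shows "\<exists>\<epsilon>>0. \<forall>x. nonneg_vec x \<and> supp x \<subseteq> I \<longrightarrow> \<epsilon> * (h \<bullet> x)^2 \<le> x \<bullet> (M *v x)"
proof -
  have "finite I" by simp
  thus ?thesis
  proof (induction I rule: finite_psubset_induct)
    case (psubset I)
    show ?case
    proof (cases "\<exists>z. is_zero M z \<and> supp z \<subseteq> I \<and> (\<forall>i\<in>I. (M *v z)$i = 0)")
      case True
      then obtain z where z: "is_zero M z" "supp z \<subseteq> I" "\<forall>i\<in>I. (M *v z)$i = 0" by blast
      show ?thesis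
      proof (rule caseA[OF cop hz z])
        fix i assume "i \<in> supp z"
        hence "I - {i} \<subset> I" using z(2) by blast
        thus "\<exists>\<epsilon>>0. \<forall>x. nonneg_vec x \<and> supp x \<subseteq> I - {i} \<longrightarrow> \<epsilon> * (h \<bullet> x)^2 \<le> x \<bullet> (M *v x)"
          by (rule psubset.IH)
      qed
    next
      case False
      define K where "K = {x::real^'n. nonneg_vec x \<and> supp x \<subseteq> I \<and> norm x = 1}"
      have loc: "\<exists>U \<delta>. open U \<and> p \<in> U \<and> \<delta> > 0 \<and> (\<forall>x\<in>U \<inter> K. \<delta> * (h \<bullet> x)^2 \<le> x \<bullet> (M *v x))"
        if pK: "p \<in> K" for p
      proof (cases "p \<bullet> (M *v p) > 0")
        case True thus ?thesis by (rule local_pos)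
      next
        case False
        have pnn: "nonneg_vec p" "supp p \<subseteq> I" "norm p = 1" using pK K_def by auto
        have "p \<bullet> (M *v p) \<ge> 0" using cop pnn unfolding copositive_def by blast
        hence "p \<bullet> (M *v p) = 0" using False by simp
        hence pz: "is_zero M p" using pnn unfolding is_zero_def by auto
        define J where "J = {i\<in>I. (M *v p)$i \<noteq> 0}"
        have Jne: "J \<noteq> {}" using \<open>\<not> (\<exists>z. _)\<close> pz pnn unfolding J_def by blast
        have "I - J \<subset> I" using Jne J_def by blast
        then obtain \<epsilon>' where e': "\<epsilon>' > 0" "\<forall>x. nonneg_vec x \<and> supp x \<subseteq> I - J \<longrightarrow> \<epsilon>' * (h \<bullet> x)^2 \<le> x \<bullet> (M *v x)"
          using psubset.IH by blast
        obtain \<delta> r where dr: "\<delta> > 0" "r > 0"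
          "\<forall>x. nonneg_vec x \<and> supp x \<subseteq> I \<and> norm x = 1 \<and> norm (x - p) < r \<longrightarrow> \<delta> * (h \<bullet> x)^2 \<le> x \<bullet> (M *v x)"
          using local_zero[OF cop pz pnn(2) J_def Jne e'] by blast
        have "\<forall>x\<in>ball p r \<inter> K. \<delta> * (h \<bullet> x)^2 \<le> x \<bullet> (M *v x)"
          using dr(3) unfolding K_def by (auto simp: dist_norm norm_minus_commute)
        thus ?thesis using dr by (intro exI[of _ "ball p r"] exI[of _ \<delta>]) auto
      qed
      obtain \<epsilon> where e: "\<epsilon> > 0" "\<forall>x\<in>K. \<epsilon> * (h \<bullet> x)^2 \<le> x \<bullet> (M *v x)"
        using compact_local[OF compact_K[of I, folded K_def], of "\<lambda>x. (h \<bullet> x)^2" "\<lambda>x. x \<bullet> (M *v x)"] loc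
        by auto
      have "\<epsilon> * (h \<bullet> x)^2 \<le> x \<bullet> (M *v x)" if x: "nonneg_vec x" "supp x \<subseteq> I" for x
      proof (cases "x = 0")
        case True thus ?thesis by simp
      next
        case False
        define u where "u = (1 / norm x) *\<^sub>R x"
        have nx: "norm x > 0" using False by simp
        have uK: "u \<in> K" unfolding K_def u_def using x nx
          by (auto simp: nonneg_vec_def supp_def)
        have xu: "x = norm x *\<^sub>R u" unfolding u_def using nx by simp
        have "\<epsilon> * (h \<bullet> x)^2 = (norm x)^2 * (\<epsilon> * (h \<bullet> u)^2)"
          by (subst xu) (simp add: power_mult_distrib algebra_simps)
        also have "\<dots> \<le> (norm x)^2 * (u \<bullet> (M *v u))" using e uK by (intro mult_left_mono) auto
        also have "\<dots> = x \<bullet> (M *v x)"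
        proof -
          obtain nx where nxd: "nx = norm x" by blast
          have xu': "x = nx *\<^sub>R u" using xu nxd by simp
          have "x \<bullet> (M *v x) = (nx *\<^sub>R u) \<bullet> (M *v (nx *\<^sub>R u))" using xu' by simp
          also have "\<dots> = nx^2 * (u \<bullet> (M *v u))" by (simp add: matrix_vector_mult_scaleR power2_eq_square)
          finally show ?thesis using nxd by simp
        qed
        finally show ?thesis .
      qed
      thus ?thesis using e by blast
    qed
  qed
qed



lemma mm_rdistrib: "((A::real^'n^'m) + B) ** (C::real^'k^'n) = A ** C + B ** C"
  by (simp add: matrix_matrix_mult_def vec_eq_iff sum.distrib distrib_right)

lemma outer_mv: "outer h *v x = (h \<bullet> x) *\<^sub>R h"
  by (simp add: vec_eq_iff outer_def matrix_vector_mult_def dot_real sum_distrib_left sum_distrib_right mult_ac)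

lemma outer_quad: "x \<bullet> (outer h *v x) = (h \<bullet> x)^2"
  by (simp add: outer_mv power2_eq_square inner_commute)

lemma outer_sym: "symmetric_mat (k *\<^sub>R outer h)"
  by (simp add: symmetric_mat_def transpose_def outer_def vec_eq_iff mult.commute)

lemma trace_outer: "trace (outer b ** M) = b \<bullet> (M *v b)"
proof -
  have "trace (outer b ** M) = (\<Sum>i\<in>UNIV. \<Sum>k\<in>UNIV. b$i * b$k * M$k$i)"
    by (simp add: trace_def matrix_matrix_mult_def outer_def)
  also have "\<dots> = (\<Sum>k\<in>UNIV. \<Sum>i\<in>UNIV. b$i * b$k * M$k$i)" by (rule sum.swap)
  also have "\<dots> = b \<bullet> (M *v b)"
    by (simp add: dot_real matrix_vector_mult_def sum_distrib_left mult_ac)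
  finally show ?thesis .
qed

lemma trace_list: "trace (sum_list (map outer bs) ** M) = sum_list (map (\<lambda>b. b \<bullet> (M *v b)) bs)"
  by (induction bs) (simp add: trace_def, simp add: mm_rdistrib trace_add trace_outer)

lemma zero_cols:
  fixes M :: "real^'n^'n"
  assumes cop: "copositive M" and nf: "nonneg_factorization A bs" and tr: "trace (A ** M) = 0"
  shows "\<forall>b\<in>set bs. b = 0 \<or> is_zero M b"
proof -
  have A: "A = sum_list (map outer bs)" and nn: "\<forall>b\<in>set bs. nonneg_vec b" using nf unfolding nonneg_factorization_def by auto
  have q0: "\<forall>b\<in>set bs. 0 \<le> b \<bullet> (M *v b)" using nn cop unfolding copositive_def by blast
  have "sum_list (map (\<lambda>b. b \<bullet> (M *v b)) bs) = 0" using tr A trace_list by metis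
  hence "\<forall>x\<in>set (map (\<lambda>b. b \<bullet> (M *v b)) bs). x = 0"
    using q0 by (subst (asm) sum_list_nonneg_eq_0_iff) auto
  thus ?thesis using nn unfolding is_zero_def by auto
qed

lemma surj_V:
  fixes M :: "real^'n^'n" and V :: "real^'n^'n"
  assumes exc: "exceptional M" and ext: "extremal M"
    and dec: "\<And>b. is_zero M b \<Longrightarrow> \<exists>l. nonneg_vec l \<and> b = V *v l"
  shows "surj ((*v) V)"
proof (rule ccontr)
  assume ns: "\<not> surj ((*v) V)"
  have cop: "copositive M" using exc unfolding exceptional_def by simp
  define S where "S = range ((*v) V)"
  have "subspace S" unfolding S_def by (intro linear_subspace_image subspace_UNIV) simp
  hence spanS: "span S = S" by simp
  have "S \<noteq> UNIV" using ns unfolding S_def by auto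
  hence "span S \<noteq> UNIV" by (metis spanS)
  then obtain a where a: "a \<noteq> 0" "span S \<subseteq> {x. a \<bullet> x = 0}" using span_not_univ_subset_hyperplane by blast
  have hz: "a \<bullet> z = 0" if zz: "is_zero M z" for z
  proof -
    obtain l where "z = V *v l" using dec[OF zz] by blast
    hence "z \<in> span S" unfolding S_def by (simp add: span_base)
    thus ?thesis using a by auto
  qed
  obtain \<epsilon> where e: "\<epsilon> > 0" "\<forall>x. nonneg_vec x \<and> supp x \<subseteq> UNIV \<longrightarrow> \<epsilon> * (a \<bullet> x)^2 \<le> x \<bullet> (M *v x)"
    using pert_aux[OF cop hz, of UNIV] by blast
  define X where "X = \<epsilon> *\<^sub>R outer a"
  have Xv: "x \<bullet> (X *v x) = \<epsilon> * (a \<bullet> x)^2" for x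
    unfolding X_def by (simp flip: scaleR_matrix_vector_assoc add: outer_quad)
  have copX: "copositive X" unfolding copositive_def X_def using Xv e(1) outer_sym[of \<epsilon> a] X_def by simp
  have symM: "symmetric_mat M" using cop unfolding copositive_def by simp
  have copY: "copositive (M - X)"
    unfolding copositive_def
  proof (intro conjI allI impI)
    show "symmetric_mat (M - X)" using symM outer_sym[of \<epsilon> a]
      unfolding symmetric_mat_def X_def by (simp add: transpose_def vec_eq_iff)
    fix x :: "real^'n" assume "nonneg_vec x"
    hence "\<epsilon> * (a \<bullet> x)^2 \<le> x \<bullet> (M *v x)" using e by simp
    thus "0 \<le> x \<bullet> ((M - X) *v x)" using Xv[of x] by (simp add: matrix_vector_mult_diff_rdistrib inner_diff_right)
  qed
  have "M = X + (M - X)" by simp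
  then obtain c where c: "c \<ge> 0" "X = c *\<^sub>R M" using ext copX copY unfolding extremal_def by blast
  show False
  proof (cases "c = 0")
    case True
    hence "X = 0" using c by simp
    hence "(X $ i $ i) = 0" for i by simp
    hence "\<epsilon> * (a$i * a$i) = 0" for i unfolding X_def outer_def by simp
    hence "a$i = 0" for i using e(1) by simp
    thus False using a(1) by (simp add: vec_eq_iff)
  next
    case False
    hence cp: "c > 0" using c by simp
    have MX: "M = (1/c) *\<^sub>R X" using c cp by simp
    have "psd M" unfolding psd_def
    proof (intro conjI allI)
      show "symmetric_mat M" by (rule symM)
      fix x :: "real^'n"
      have "x \<bullet> (M *v x) = (1/c) * (x \<bullet> (X *v x))"
        by (subst MX) (simp flip: scaleR_matrix_vector_assoc)
      thus "0 \<le> x \<bullet> (M *v x)" using Xv[of x] e(1) cp by simp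
    qed
    moreover have "symmetric_mat (0::real^'n^'n)" "nonneg_mat (0::real^'n^'n)"
      unfolding symmetric_mat_def nonneg_mat_def by (auto simp: transpose_def vec_eq_iff)
    ultimately show False using exc unfolding exceptional_def by (metis add.right_neutral)
  qed
qed



lemma conj_outer: "outer ((P::real^'n^'n) *v b) = P ** outer b ** transpose P"
proof -
  have "(P ** outer b ** transpose P) $ i $ j = (P *v b)$i * (P *v b)$j" for i j
  proof -
    have "(P ** outer b ** transpose P) $ i $ j = (\<Sum>l\<in>UNIV. (\<Sum>k\<in>UNIV. P$i$k * (b$k * b$l)) * P$j$l)"
      by (simp add: matrix_matrix_mult_def outer_def transpose_def)
    also have "\<dots> = (\<Sum>l\<in>UNIV. \<Sum>k\<in>UNIV. (P$i$k * b$k) * (P$j$l * b$l))"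
      by (simp add: sum_distrib_left sum_distrib_right mult_ac)
    also have "\<dots> = (\<Sum>k\<in>UNIV. P$i$k * b$k) * (\<Sum>l\<in>UNIV. P$j$l * b$l)"
      by (subst sum.swap) (simp add: sum_product)
    finally show ?thesis by (simp add: matrix_vector_mult_def)
  qed
  thus ?thesis by (simp add: vec_eq_iff outer_def)
qed

lemma conj_sum_list:
  "sum_list (map (\<lambda>b. (P::real^'n^'n) ** outer b ** transpose P) bs) = P ** sum_list (map outer bs) ** transpose P"
  by (induction bs) (simp_all add: matrix_add_ldistrib mm_rdistrib)

lemma conj_sum:
  "finite S \<Longrightarrow> (\<Sum>b\<in>S. (P::real^'n^'n) ** outer b ** transpose P) = P ** (\<Sum>b\<in>S. outer b) ** transpose P"
  by (induction S rule: finite_induct) (simp_all add: matrix_add_ldistrib mm_rdistrib)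

lemma nf_transfer:
  assumes nf: "nonneg_factorization X bs" and nn: "\<forall>b\<in>set bs. nonneg_vec ((P::real^'n^'n) *v b)"
  shows "nonneg_factorization (P ** X ** transpose P) (map ((*v) P) bs)"
  using nf nn unfolding nonneg_factorization_def
  by (auto simp: comp_def conj_outer conj_sum_list)

lemma inj_P:
  assumes inv: "(Q::real^'n^'n) ** P = mat 1"
  shows "inj ((*v) P)"
proof
  fix b c assume "P *v b = P *v c"
  hence "Q *v (P *v b) = Q *v (P *v c)" by simp
  thus "b = c" by (simp add: matrix_vector_mul_assoc inv)
qed

lemma cpf_transfer:
  assumes S: "S \<in> cp_factorizations X" and nn: "\<forall>b\<in>S. nonneg_vec ((P::real^'n^'n) *v b)"
    and inv: "(Q::real^'n^'n) ** P = mat 1"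
  shows "(*v) P ` S \<in> cp_factorizations (P ** X ** transpose P)"
proof -
  have inj: "inj ((*v) P)" by (rule inj_P[OF inv])
  have S': "finite S" "\<forall>b\<in>S. \<forall>c\<in>S. b \<noteq> c \<longrightarrow> independent {b, c}" "X = (\<Sum>b\<in>S. outer b)"
    using S unfolding cp_factorizations_def by auto
  have ind: "independent {P *v b, P *v c}" if "b \<in> S" "c \<in> S" "P *v b \<noteq> P *v c" for b c
  proof -
    have "b \<noteq> c" using that by auto
    hence "independent {b, c}" using S' that by blast
    hence "independent ((*v) P ` {b, c})"
      by (rule linear_independent_injective_image[OF matrix_vector_mul_linear])
         (rule inj_on_subset[OF inj], simp)
    thus ?thesis by simp
  qed
  have "(\<Sum>c\<in>(*v) P ` S. outer c) = (\<Sum>b\<in>S. outer (P *v b))"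
    by (subst sum.reindex) (auto intro: inj_on_subset[OF inj])
  also have "\<dots> = P ** X ** transpose P" using S' by (simp add: conj_outer conj_sum)
  finally have sumeq: "(\<Sum>c\<in>(*v) P ` S. outer c) = P ** X ** transpose P" .
  show ?thesis unfolding cp_factorizations_def
    using S'(1) nn ind sumeq by auto
qed



theorem lemma4p5:
  fixes M :: "real^'n^'n" and w :: "'n \<Rightarrow> real^'n"
  assumes "exceptional M" and "extremal M"
    and "inj w" and "representative_zeros M (range w)"
  shows "\<forall>A. completely_positive A \<and> trace (A ** M) = 0 \<longrightarrow>
           (\<exists>C. completely_positive C \<and>
                A = col_matrix w ** C ** transpose (col_matrix w) \<and>
                cp_rank A = cp_rank C \<and>
                cp_factorizations A \<approx> cp_factorizations C \<and>
                minimal_cp_factorizations A \<approx> minimal_cp_factorizations C)"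
proof (intro allI impI)
  fix A :: "real^'n^'n"
  assume A: "completely_positive A \<and> trace (A ** M) = 0"
  have exc: "exceptional M" and ext: "extremal M" and rep: "representative_zeros M (range w)"
    using assms by auto
  have cop: "copositive M" using exc unfolding exceptional_def by simp
  have mz: "\<exists>i t. t > 0 \<and> z = t *\<^sub>R w i" if "minimal_zero M z" for z
    using rep that unfolding representative_zeros_def by blast
  have wnn: "nonneg_vec (w j)" for j
    using rep unfolding representative_zeros_def minimal_zero_def is_zero_def by auto
  define V where "V = col_matrix w"
  have dec: "\<exists>l. nonneg_vec l \<and> b = V *v l" if "is_zero M b" for b
    using decomp[OF cop mz that] V_def by blast
  have "surj ((*v) V)" by (rule surj_V[OF exc ext dec])
  then obtain B where VB: "V ** B = mat 1" using matrix_right_invertible_surjective by blast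
  hence BV: "B ** V = mat 1" using matrix_left_right_inverse by blast
  have VBv: "V *v (B *v b) = b" for b by (simp add: matrix_vector_mul_assoc VB)
  have BVv: "B *v (V *v c) = c" for c by (simp add: matrix_vector_mul_assoc BV)
  have good: "nonneg_vec (B *v b)" if gb: "b = 0 \<or> is_zero M b" for b
  proof (cases "b = 0")
    case True thus ?thesis by (simp add: nonneg_vec_def)
  next
    case False
    then obtain l where "nonneg_vec l" "b = V *v l" using dec gb by blast
    thus ?thesis by (simp add: BVv)
  qed
  have Vnn: "nonneg_vec (V *v c)" if "nonneg_vec c" for c
    using that wnn unfolding V_def nonneg_vec_def
    by (auto simp: colmat_mult sum_component intro!: sum_nonneg)
  have tr: "trace (A ** M) = 0" using A by simp
  define C where "C = B ** A ** transpose B"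
  have AC: "A = V ** C ** transpose V"
  proof -
    have "V ** C ** transpose V = (V ** B) ** A ** (transpose B ** transpose V)"
      unfolding C_def by (simp add: matrix_mul_assoc)
    also have "transpose B ** transpose V = mat 1"
      by (metis VB matrix_transpose_mul transpose_mat)
    finally show ?thesis using VB by simp
  qed
  have AtoC: "nonneg_factorization C (map ((*v) B) bs)" if "nonneg_factorization A bs" for bs
    unfolding C_def
    by (rule nf_transfer[OF that]) (use zero_cols[OF cop that tr] good in blast)
  have CtoA: "nonneg_factorization A (map ((*v) V) cs)" if nf: "nonneg_factorization C cs" for cs
  proof -
    have "\<forall>c\<in>set cs. nonneg_vec (V *v c)" using nf Vnn unfolding nonneg_factorization_def by blast
    from nf_transfer[OF nf this] show ?thesis using AC by simp
  qed
  obtain bs0 where bs0: "nonneg_factorization A bs0" using A unfolding completely_positive_def by blast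
  have cpC: "completely_positive C" using AtoC[OF bs0] unfolding completely_positive_def by blast
  have rank: "cp_rank A = cp_rank C"
  proof -
    have "(\<lambda>k. \<exists>bs. length bs = k \<and> nonneg_factorization A bs) = (\<lambda>k. \<exists>bs. length bs = k \<and> nonneg_factorization C bs)"
    proof (rule HOL.ext, rule iffI)
      fix k assume "\<exists>bs. length bs = k \<and> nonneg_factorization A bs"
      then obtain bs where "length bs = k" "nonneg_factorization A bs" by blast
      thus "\<exists>bs. length bs = k \<and> nonneg_factorization C bs" using AtoC by (metis length_map)
    next
      fix k assume "\<exists>bs. length bs = k \<and> nonneg_factorization C bs"
      then obtain bs where "length bs = k" "nonneg_factorization C bs" by blast
      thus "\<exists>bs. length bs = k \<and> nonneg_factorization A bs" using CtoA by (metis length_map)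
    qed
    thus ?thesis unfolding cp_rank_def by simp
  qed
  have SA: "(*v) B ` S \<in> cp_factorizations C" if S: "S \<in> cp_factorizations A" for S
  proof -
    have fin: "finite S" and sumS: "A = (\<Sum>b\<in>S. outer b)" and nnS: "\<forall>b\<in>S. nonneg_vec b"
      using S unfolding cp_factorizations_def by auto
    obtain xs where xs: "set xs = S" "distinct xs" using finite_distinct_list[OF fin] by blast
    have "nonneg_factorization A xs" unfolding nonneg_factorization_def
      using xs nnS sumS by (simp add: sum_list_distinct_conv_sum_set)
    hence "\<forall>b\<in>S. nonneg_vec (B *v b)" using zero_cols[OF cop _ tr] good xs by blast
    thus ?thesis unfolding C_def by (rule cpf_transfer[OF S _ VB])
  qed
  have TC: "(*v) V ` T \<in> cp_factorizations A" if T: "T \<in> cp_factorizations C" for T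
  proof -
    have "\<forall>c\<in>T. nonneg_vec (V *v c)" using T Vnn unfolding cp_factorizations_def by blast
    from cpf_transfer[OF T this BV] show ?thesis using AC by simp
  qed
  have injB: "inj ((*v) B)" by (rule inj_P[OF VB])
  have injV: "inj ((*v) V)" by (rule inj_P[OF BV])
  have left: "(*v) V ` ((*v) B ` S) = S" for S by (simp add: image_image VBv)
  have right: "(*v) B ` ((*v) V ` T) = T" for T by (simp add: image_image BVv)
  have bij1: "bij_betw (\<lambda>S. (*v) B ` S) (cp_factorizations A) (cp_factorizations C)"
    by (rule bij_betw_byWitness[where f'="\<lambda>T. (*v) V ` T"]) (use left right SA TC in auto)
  have bij2: "bij_betw (\<lambda>S. (*v) B ` S) (minimal_cp_factorizations A) (minimal_cp_factorizations C)"
  proof (rule bij_betw_byWitness[where f'="\<lambda>T. (*v) V ` T"])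
    show "\<forall>a\<in>minimal_cp_factorizations A. (*v) V ` ((*v) B ` a) = a" using left by simp
    show "\<forall>a\<in>minimal_cp_factorizations C. (*v) B ` ((*v) V ` a) = a" using right by simp
    show "(\<lambda>S. (*v) B ` S) ` minimal_cp_factorizations A \<subseteq> minimal_cp_factorizations C"
      unfolding minimal_cp_factorizations_def using SA rank
      by (auto simp: card_image inj_on_subset[OF injB])
    show "(\<lambda>T. (*v) V ` T) ` minimal_cp_factorizations C \<subseteq> minimal_cp_factorizations A"
      unfolding minimal_cp_factorizations_def using TC rank
      by (auto simp: card_image inj_on_subset[OF injV])
  qed
  show "\<exists>C. completely_positive C \<and>
                A = col_matrix w ** C ** transpose (col_matrix w) \<and>
                cp_rank A = cp_rank C \<and>
                cp_factorizations A \<approx> cp_factorizations C \<and>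
                minimal_cp_factorizations A \<approx> minimal_cp_factorizations C"
    using cpC AC rank bij1 bij2 unfolding V_def eqpoll_def by blast
qed

end
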